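(* Fix $c\in(0,1)$ and let $S:=[-1,-c)\cup(c,1]$. For $f\in L^1_{\mathrm{loc}}(\mathbb{R})$ let $$h(\gamma)=Kf(\gamma):=\int_{\mathbb{R}} f(t)\,\chi_S\Big(\frac{\gamma}{|t|}\Big)\,dt,\qquad\gamma\in\mathbb{R}.$$ Then: (i) If $f\in L^1(\mathbb{R})$, then $\sum_{j\in\mathbb{Z}} h(c^j\gamma)=\int_{\mathbb{R}}f(t)\,dt$ for all $\gamma\in\mathbb{R}\setminus\{0\}$. (ii) If $f\in C^k(\mathbb{R})$ for some $k\in\mathbb{N}\cup\{0\}$ and $f$ is supported away from the origin (i.e., $f$ vanishes on a neighborhood of $0$), then $h\in C^{k+1}(\mathbb{R})$.
   Context: $\chi_S$ denotes the indicator function of $S$; equivalently $Kf(\gamma)=\int_{-|\gamma|/c}^{-|\gamma|}f(t)\,dt+\int_{|\gamma|}^{|\gamma|/c}f(t)\,dt$. *)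

theory Defs
  imports "HOL-Analysis.Analysis"
begin

definition Sset :: "real \<Rightarrow> real set" where
  "Sset c = {-1..<-c} \<union> {c<..1}"

text \<open>The operator K: (K f)(gamma) = integral over R of f(t) * chi_S(gamma/|t|) dt (Lebesgue).
  At t = 0 the Isabelle convention gamma/0 = 0 is used; this is a null set.\<close>
definition Kop :: "real \<Rightarrow> (real \<Rightarrow> real) \<Rightarrow> real \<Rightarrow> real" where
  "Kop c f \<gamma> = (\<integral>t. f t * indicator (Sset c) (\<gamma> / \<bar>t\<bar>) \<partial>lborel)"

definition Ck :: "nat \<Rightarrow> (real \<Rightarrow> real) \<Rightarrow> bool" where
  "Ck k f \<longleftrightarrow> (\<forall>m<k. \<forall>x. ((deriv ^^ m) f) differentiable (at x))
                 \<and> continuous_on UNIV ((deriv ^^ k) f)"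

end

theory Submission
  imports Defs
begin

lemma deriv_iter_local:
  assumes "open U" "\<forall>y\<in>U. u y = g y" "x \<in> U"
  shows "(deriv ^^ m) u x = (deriv ^^ m) g x"
  using assms(3)
proof (induction m arbitrary: x)
  case 0
  then show ?case using assms by simp
next
  case (Suc m)
  have ev: "eventually (\<lambda>y. (deriv ^^ m) u y = (deriv ^^ m) g y) (nhds x)"
    using eventually_nhds_in_open[OF assms(1) Suc.prems] Suc.IH
    by (auto elim: eventually_mono)
  show ?case using deriv_cong_ev[OF ev refl] by simp
qed

definition wit :: "nat \<Rightarrow> (real \<Rightarrow> real) \<Rightarrow> (nat \<Rightarrow> real \<Rightarrow> real) \<Rightarrow> bool" where
  "wit k u D \<longleftrightarrow> D 0 = u \<and> (\<forall>j<k. \<forall>x. (D j has_real_derivative D (Suc j) x) (at x))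
      \<and> continuous_on UNIV (D k)"

lemma Ck_imp_wit: "Ck k u \<Longrightarrow> wit k u (\<lambda>j. (deriv ^^ j) u)"
  unfolding Ck_def wit_def
  by (auto simp: DERIV_deriv_iff_real_differentiable)

lemma wit_imp_Ck:
  assumes "wit k u D" shows "Ck k u"
proof -
  have eq: "j \<le> k \<Longrightarrow> (deriv ^^ j) u = D j" for j
  proof (induction j)
    case 0 then show ?case using assms by (simp add: wit_def)
  next
    case (Suc j)
    then have "(deriv ^^ j) u = D j" by simp
    moreover have "\<And>x. (D j has_real_derivative D (Suc j) x) (at x)"
      using assms Suc.prems by (simp add: wit_def)
    ultimately show ?case by (auto intro!: ext DERIV_imp_deriv)
  qed
  show ?thesis unfolding Ck_def
  proof safe
    fix m x assume "m < k"
    then have "(deriv ^^ m) u = D m" "(D m has_real_derivative D (Suc m) x) (at x)"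
      using eq assms by (auto simp: wit_def)
    then show "(deriv ^^ m) u differentiable at x"
      using real_differentiable_def by auto
  next
    show "continuous_on UNIV ((deriv ^^ k) u)" using eq[of k] assms by (simp add: wit_def)
  qed
qed

lemma Ck_iff_wit: "Ck k u \<longleftrightarrow> (\<exists>D. wit k u D)"
  using Ck_imp_wit wit_imp_Ck by blast

lemma Ck_lin:
  assumes "Ck k u" "Ck k v"
  shows "Ck k (\<lambda>x. a * u x + b * v x)"
proof -
  obtain Du Dv where u: "wit k u Du" and v: "wit k v Dv" using assms Ck_iff_wit by blast
  have "wit k (\<lambda>x. a * u x + b * v x) (\<lambda>j x. a * Du j x + b * Dv j x)"
    using u v unfolding wit_def
    by (auto intro!: derivative_eq_intros continuous_intros)
  then show ?thesis using wit_imp_Ck by blast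
qed

lemma Ck_scale:
  assumes "Ck k u"
  shows "Ck k (\<lambda>x. u (a * x))"
proof -
  obtain D where u: "wit k u D" using assms Ck_iff_wit by blast
  have "wit k (\<lambda>x. u (a * x)) (\<lambda>j x. a ^ j * D j (a * x))"
    unfolding wit_def
  proof safe
    fix j x assume "j < k"
    then have d: "(D j has_real_derivative D (Suc j) (a*x)) (at (a*x))" using u by (simp add: wit_def)
    have "((\<lambda>x. D j (a * x)) has_real_derivative D (Suc j) (a*x) * a) (at x)"
      by (rule DERIV_chain2[of "D j" _ "\<lambda>x. a * x" x, OF d]) (auto intro!: derivative_eq_intros)
    then have "((\<lambda>x. a ^ j * D j (a * x)) has_real_derivative a ^ j * (D (Suc j) (a*x) * a)) (at x)"
      by (rule DERIV_cmult)
    then show "((\<lambda>x. a ^ j * D j (a * x)) has_real_derivative a ^ Suc j * D (Suc j) (a * x)) (at x)"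
      by (simp add: algebra_simps)
  next
    have "continuous_on UNIV (D k)" using u by (simp add: wit_def)
    then show "continuous_on UNIV (\<lambda>x. a ^ k * D k (a * x))"
    proof -
      have "continuous_on UNIV (\<lambda>x. D k (a * x))"
        by (rule continuous_on_compose2[of UNIV "D k"]) (use \<open>continuous_on UNIV (D k)\<close> in \<open>auto intro: continuous_intros\<close>)
      then show ?thesis by (intro continuous_intros)
    qed
  qed (use u in \<open>auto simp: wit_def\<close>)
  then show ?thesis using wit_imp_Ck by blast
qed

lemma Ck_local:
  assumes "\<And>x. \<exists>U g. open U \<and> x \<in> U \<and> Ck k g \<and> (\<forall>y\<in>U. u y = g y)"
  shows "Ck k u"
  unfolding Ck_def
proof safe
  fix m x assume "m < k"
  obtain U g where U: "open U" "x \<in> U" "Ck k g" "\<forall>y\<in>U. u y = g y" using assms by blast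
  have eq: "\<forall>y\<in>U. (deriv ^^ m) g y = (deriv ^^ m) u y"
    using deriv_iter_local[OF U(1)] U(4) by metis
  have "(deriv ^^ m) g differentiable at x" using U(3) \<open>m<k\<close> by (simp add: Ck_def)
  then obtain D where "((deriv ^^ m) g has_derivative D) (at x)" by (auto simp: differentiable_def)
  then have "((deriv ^^ m) u has_derivative D) (at x)"
    by (rule has_derivative_transform_within_open[OF _ U(1) U(2)]) (use eq in auto)
  then show "(deriv ^^ m) u differentiable at x" by (auto simp: differentiable_def)
next
  show "continuous_on UNIV ((deriv ^^ k) u)"
    unfolding continuous_on_eq_continuous_at[OF open_UNIV]
  proof
    fix x :: real
    obtain U g where U: "open U" "x \<in> U" "Ck k g" "\<forall>y\<in>U. u y = g y" using assms by blast
    have eq: "\<forall>y\<in>U. (deriv ^^ k) u y = (deriv ^^ k) g y"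
      using deriv_iter_local[OF U(1)] U(4) by metis
    have ev: "eventually (\<lambda>y. (deriv ^^ k) u y = (deriv ^^ k) g y) (nhds x)"
      using eventually_nhds_in_open[OF U(1) U(2)] eq by (auto elim: eventually_mono)
    have "isCont ((deriv ^^ k) g) x" using U(3)
      by (simp add: Ck_def continuous_on_eq_continuous_at[OF open_UNIV])
    then show "isCont ((deriv ^^ k) u) x" using isCont_cong[OF ev] by simp
  qed
qed

lemma Ck_const0: "Ck k (\<lambda>x. 0)"
proof -
  have "wit k (\<lambda>x. 0) (\<lambda>j x. 0)" unfolding wit_def by auto
  then show ?thesis using wit_imp_Ck by blast
qed

lemma Ck_cont: assumes "Ck k u" shows "continuous_on UNIV u"
proof -
  obtain D where u: "wit k u D" using assms Ck_iff_wit by blast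
  show ?thesis
  proof (cases k)
    case 0 then show ?thesis using u unfolding wit_def by metis
  next
    case (Suc k')
    then have "\<And>x. (u has_real_derivative D 1 x) (at x)" using u by (auto simp: wit_def)
    then show ?thesis
      by (auto simp: continuous_on_eq_continuous_at intro: DERIV_isCont)
  qed
qed

lemma ind_eq:
  assumes "0 < c"
  shows "indicator (Sset c) (\<gamma> / \<bar>t\<bar>) = (indicator {t. \<bar>\<gamma>\<bar> \<le> \<bar>t\<bar> \<and> \<bar>t\<bar> < \<bar>\<gamma>\<bar>/c} t :: real)"
proof (cases "t = 0")
  case True
  then show ?thesis using assms by (auto simp: Sset_def indicator_def)
next
  case False
  then have tp: "\<bar>t\<bar> > 0" by simp
  have ctp: "c * \<bar>t\<bar> > 0" using tp assms by simp
  have "(\<gamma> / \<bar>t\<bar> \<in> Sset c) \<longleftrightarrow> (\<bar>\<gamma>\<bar> \<le> \<bar>t\<bar> \<and> \<bar>t\<bar> < \<bar>\<gamma>\<bar>/c)"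
    using tp assms ctp
    apply (cases "\<gamma> \<ge> 0")
    apply (auto simp: Sset_def field_simps)
    using ctp by linarith+
  then show ?thesis by (simp add: indicator_def)
qed

lemma Kop_eq:
  assumes "0 < c"
  shows "Kop c f \<gamma> = (\<integral>t. f t * indicator {t. \<bar>\<gamma>\<bar> \<le> \<bar>t\<bar> \<and> \<bar>t\<bar> < \<bar>\<gamma>\<bar>/c} t \<partial>lborel)"
  unfolding Kop_def using ind_eq[OF assms] by simp

lemma Kop_zero:
  assumes "0 < c" "\<forall>t. \<bar>t\<bar> < \<delta> \<longrightarrow> f t = 0" "\<bar>\<gamma>\<bar> < c * \<delta>"
  shows "Kop c f \<gamma> = 0"
proof -
  have "\<And>t. f t * indicator {t. \<bar>\<gamma>\<bar> \<le> \<bar>t\<bar> \<and> \<bar>t\<bar> < \<bar>\<gamma>\<bar>/c} t = (0::real)"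
  proof -
    fix t
    show "f t * indicator {t. \<bar>\<gamma>\<bar> \<le> \<bar>t\<bar> \<and> \<bar>t\<bar> < \<bar>\<gamma>\<bar>/c} t = (0::real)"
    proof (cases "\<bar>t\<bar> < \<bar>\<gamma>\<bar>/c")
      case True
      have "\<bar>\<gamma>\<bar>/c < \<delta>" using assms by (simp add: field_simps)
      then show ?thesis using True assms(2) by auto
    qed (auto simp: indicator_def)
  qed
  then have "(\<lambda>t. f t * indicator {t. \<bar>\<gamma>\<bar> \<le> \<bar>t\<bar> \<and> \<bar>t\<bar> < \<bar>\<gamma>\<bar>/c} t) = (\<lambda>t. 0::real)"
    by (rule ext)
  then show ?thesis using Kop_eq[OF assms(1)] by simp
qed

lemma prim_deriv:
  fixes f :: "real \<Rightarrow> real"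
  assumes "continuous_on UNIV f"
  shows "((\<lambda>u. LBINT y=0..u. f y) has_real_derivative f x) (at x)"
proof -
  have "((\<lambda>u. LBINT y=0..u. f y) has_vector_derivative f x) (at x within {min 0 x - 1..max 0 x + 1})"
    using interval_integral_FTC2[of "min 0 x - 1" 0 "max 0 x + 1" f x] continuous_on_subset[OF assms, of "{min 0 x - 1..max 0 x + 1}"]
    by (simp add: zero_ereal_def[symmetric])
  moreover have "at x within {min 0 x - 1..max 0 x + 1} = at x"
    by (rule at_within_Icc_at) auto
  ultimately show ?thesis by (simp add: has_real_derivative_iff_has_vector_derivative)
qed

lemma prim_FTC:
  fixes f :: "real \<Rightarrow> real" and a b :: real
  assumes "continuous_on UNIV f"
  shows "(LBINT y=a..b. f y) = (LBINT y=0..b. f y) - (LBINT y=0..a. f y)"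
  apply (rule interval_integral_FTC_finite)
   apply (rule continuous_on_subset[OF assms], simp)
  using prim_deriv[OF assms]
  by (simp add: has_real_derivative_iff_has_vector_derivative has_vector_derivative_at_within)

lemma Ck_prim:
  fixes f :: "real \<Rightarrow> real"
  assumes "Ck k f"
  shows "Ck (Suc k) (\<lambda>u. LBINT y=0..u. f y)"
proof -
  obtain D where D: "wit k f D" using assms Ck_iff_wit by blast
  have cf: "continuous_on UNIV f" using Ck_cont[OF assms] .
  have "wit (Suc k) (\<lambda>u. LBINT y=0..u. f y) (\<lambda>j. case j of 0 \<Rightarrow> (\<lambda>u. LBINT y=0..u. f y) | Suc i \<Rightarrow> D i)"
    unfolding wit_def
  proof safe
    fix j x assume j: "j < Suc k"
    show "((case j of 0 \<Rightarrow> (\<lambda>u. LBINT y=0..u. f y) | Suc i \<Rightarrow> D i) has_real_derivative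
          (case Suc j of 0 \<Rightarrow> (\<lambda>u. LBINT y=0..u. f y) | Suc i \<Rightarrow> D i) x) (at x)"
    proof (cases j)
      case 0 then show ?thesis using prim_deriv[OF cf] D by (simp add: wit_def)
    next
      case (Suc i) then show ?thesis using D j by (simp add: wit_def)
    qed
  next
    show "continuous_on UNIV (case Suc k of 0 \<Rightarrow> (\<lambda>u. LBINT y=0..u. f y) | Suc i \<Rightarrow> D i)"
      using D by (simp add: wit_def)
  qed simp
  then show ?thesis using wit_imp_Ck by blast
qed

lemma Kop_repr:
  fixes f :: "real \<Rightarrow> real"
  assumes cf: "continuous_on UNIV f" and c: "0 < c" "c < 1" and r: "0 < r"
  shows "(\<integral>t. f t * indicator {t. r \<le> \<bar>t\<bar> \<and> \<bar>t\<bar> < r/c} t \<partial>lborel)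
      = (LBINT t=r..r/c. f t) + (LBINT t=-(r/c)..-r. f t)"
proof -
  have rc: "r < r/c" using c r by (simp add: field_simps)
  have i1: "(LBINT t=r..r/c. f t) = (\<integral>t. f t * indicator {r<..<r/c} t \<partial>lborel)"
    using rc by (simp add: interval_lebesgue_integral_def einterval_eq_Icc set_lebesgue_integral_def mult.commute)
  have i2: "(LBINT t=-(r/c)..-r. f t) = (\<integral>t. f t * indicator {-(r/c)<..<-r} t \<partial>lborel)"
    using rc by (simp add: interval_lebesgue_integral_def einterval_eq_Icc set_lebesgue_integral_def mult.commute)
  have int1: "integrable lborel (\<lambda>t. f t * indicator {r<..<r/c} t)"
  proof -
    have "set_integrable lborel {r..r/c} f"
      by (rule borel_integrable_atLeastAtMost') (rule continuous_on_subset[OF cf], simp)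
    then have "set_integrable lborel {r<..<r/c} f"
      by (rule set_integrable_subset) auto
    then show ?thesis by (simp add: set_integrable_def mult.commute)
  qed
  have int2: "integrable lborel (\<lambda>t. f t * indicator {-(r/c)<..<-r} t)"
  proof -
    have "set_integrable lborel {-(r/c)..-r} f"
      by (rule borel_integrable_atLeastAtMost') (rule continuous_on_subset[OF cf], simp)
    then have "set_integrable lborel {-(r/c)<..<-r} f"
      by (rule set_integrable_subset) auto
    then show ?thesis by (simp add: set_integrable_def mult.commute)
  qed
  have "(\<integral>t. f t * indicator {t. r \<le> \<bar>t\<bar> \<and> \<bar>t\<bar> < r/c} t \<partial>lborel)
      = (\<integral>t. f t * indicator {r<..<r/c} t + f t * indicator {-(r/c)<..<-r} t \<partial>lborel)"
  proof (rule integral_discrete_difference[where X="{r, -r}"])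
    fix t assume "t \<notin> {r, -r}"
    then show "f t * indicator {t. r \<le> \<bar>t\<bar> \<and> \<bar>t\<bar> < r/c} t = f t * indicator {r<..<r/c} t + f t * indicator {-(r/c)<..<-r} t"
      using rc r by (auto simp: indicator_def abs_if)
  qed auto
  also have "\<dots> = (\<integral>t. f t * indicator {r<..<r/c} t \<partial>lborel) + (\<integral>t. f t * indicator {-(r/c)<..<-r} t \<partial>lborel)"
    by (rule Bochner_Integration.integral_add[OF int1 int2])
  finally show ?thesis using i1 i2 by simp
qed

lemma Kop_formula:
  fixes f :: "real \<Rightarrow> real"
  assumes cf: "continuous_on UNIV f" and c: "0 < c" "c < 1" and y: "y \<noteq> 0"
  shows "Kop c f y = (LBINT t=0..\<bar>y\<bar>/c. f t) - (LBINT t=0..\<bar>y\<bar>. f t)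
           + ((LBINT t=0..-\<bar>y\<bar>. f t) - (LBINT t=0..-(\<bar>y\<bar>/c). f t))"
  using Kop_eq[OF c(1), of f y] Kop_repr[OF cf c, of "\<bar>y\<bar>"] y
    prim_FTC[OF cf, of "\<bar>y\<bar>" "\<bar>y\<bar>/c"] prim_FTC[OF cf, of "-(\<bar>y\<bar>/c)" "-\<bar>y\<bar>"]
  by simp

lemma part2:
  fixes f :: "real \<Rightarrow> real"
  assumes c: "0 < c" "c < 1" and Cf: "Ck k f" and d: "\<delta> > 0" "\<forall>t. \<bar>t\<bar> < \<delta> \<longrightarrow> f t = 0"
  shows "Ck (Suc k) (Kop c f)"
proof -
  define P :: "real \<Rightarrow> real" where "P = (\<lambda>u. LBINT y=0..u. f y)"
  have cf: "continuous_on UNIV f" using Ck_cont[OF Cf] .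
  have CP: "Ck (Suc k) P" using Ck_prim[OF Cf] unfolding P_def .
  have g1: "Ck (Suc k) (\<lambda>x. P ((1/c)*x))" using Ck_scale[OF CP] .
  have g3: "Ck (Suc k) (\<lambda>x. P ((-1)*x))" using Ck_scale[OF CP] .
  have g4: "Ck (Suc k) (\<lambda>x. P ((-1/c)*x))" using Ck_scale[OF CP] .
  have G12: "Ck (Suc k) (\<lambda>x. 1 * P ((1/c)*x) + (-1) * P x)" using Ck_lin[OF g1 CP] .
  have G34: "Ck (Suc k) (\<lambda>x. 1 * P ((-1)*x) + (-1) * P ((-1/c)*x))" using Ck_lin[OF g3 g4] .
  define G where "G = (\<lambda>x. 1 * (1 * P ((1/c)*x) + (-1) * P x) + 1 * (1 * P ((-1)*x) + (-1) * P ((-1/c)*x)))"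
  have CG: "Ck (Suc k) G" unfolding G_def using Ck_lin[OF G12 G34] .
  have CGn: "Ck (Suc k) (\<lambda>x. (-1) * G x + 0 * G x)" using Ck_lin[OF CG CG] .
  have pos: "Kop c f y = G y" if "y > 0" for y
    using Kop_formula[OF cf c, of y] that unfolding G_def P_def by simp
  have neg: "Kop c f y = (-1) * G y + 0 * G y" if "y < 0" for y
    using Kop_formula[OF cf c, of y] that unfolding G_def P_def by simp
  show ?thesis
  proof (rule Ck_local)
    fix x :: real
    consider "x > 0" | "x < 0" | "x = 0" by linarith
    then show "\<exists>U g. open U \<and> x \<in> U \<and> Ck (Suc k) g \<and> (\<forall>y\<in>U. Kop c f y = g y)"
    proof cases
      case 1
      then show ?thesis using pos CG by (intro exI[of _ "{0<..}"] exI[of _ G]) auto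
    next
      case 2
      then show ?thesis using neg CGn
        by (intro exI[of _ "{..<0}"] exI[of _ "\<lambda>x. (-1) * G x + 0 * G x"]) auto
    next
      case 3
      have cd: "c * \<delta> > 0" using c d by simp
      have "\<forall>y\<in>{-(c*\<delta>)<..<c*\<delta>}. Kop c f y = 0"
        using Kop_zero[OF c(1) d(2)] by (auto simp: abs_less_iff)
      then show ?thesis using 3 cd Ck_const0
        by (intro exI[of _ "{-(c*\<delta>)<..<c*\<delta>}"] exI[of _ "\<lambda>x. 0"]) auto
    qed
  qed
qed

lemma has_sum_integral_partition:
  fixes f :: "real \<Rightarrow> real" and A :: "int \<Rightarrow> real set"
  assumes f: "integrable lborel f" and meas: "\<And>j. A j \<in> sets lborel"
    and disj: "disjoint_family A" and cover: "\<And>t. t \<noteq> 0 \<Longrightarrow> \<exists>j. t \<in> A j"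
  shows "((\<lambda>j. \<integral>t. f t * indicator (A j) t \<partial>lborel) has_sum (\<integral>t. f t \<partial>lborel)) UNIV"
proof -
  define U where "U F = \<Union>(A ` F)" for F
  have Usets: "finite F \<Longrightarrow> U F \<in> sets lborel" for F
    unfolding U_def using meas by auto
  have sumF: "(\<Sum>j\<in>F. \<integral>t. f t * indicator (A j) t \<partial>lborel) = (\<integral>t. f t * indicator (U F) t \<partial>lborel)"
    if F: "finite F" for F
  proof -
    have "(\<Sum>j\<in>F. \<integral>t. f t * indicator (A j) t \<partial>lborel) = (\<integral>t. (\<Sum>j\<in>F. f t * indicator (A j) t) \<partial>lborel)"
      by (rule Bochner_Integration.integral_sum[symmetric]) (rule integrable_real_mult_indicator[OF meas f])
    also have "\<dots> = (\<integral>t. f t * indicator (U F) t \<partial>lborel)"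
    proof (rule Bochner_Integration.integral_cong[OF refl])
      fix t
      have "disjoint_family_on A F" using disj disjoint_family_on_mono by blast
      then have "indicator (U F) t = (\<Sum>j\<in>F. indicator (A j) t :: real)"
        unfolding U_def by (rule indicator_UN_disjoint[OF F])
      then show "(\<Sum>j\<in>F. f t * indicator (A j) t) = f t * indicator (U F) t"
        by (simp add: sum_distrib_left)
    qed
    finally show ?thesis .
  qed
  define W where "W n = U {-int n..int n}" for n :: nat
  have Wsets: "- W n \<in> sets lborel" for n
  proof -
    have "W n \<in> sets lborel" unfolding W_def by (rule Usets) simp
    then have "space lborel - W n \<in> sets lborel" by blast
    then show ?thesis by (simp add: Compl_eq_Diff_UNIV)
  qed
  have af: "integrable lborel (\<lambda>t. \<bar>f t\<bar>)" using f by simp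
  have lim: "(\<lambda>n. \<integral>t. \<bar>f t\<bar> * indicator (- W n) t \<partial>lborel) \<longlonglongrightarrow> (integral\<^sup>L lborel (\<lambda>t::real. 0::real))"
  proof (rule Bochner_Integration.integral_dominated_convergence[where M=lborel and w="\<lambda>t. \<bar>f t\<bar>" and f="\<lambda>t. 0"
        and s="\<lambda>n t. \<bar>f t\<bar> * indicator (- W n) t"])
    show "(\<lambda>t. 0::real) \<in> borel_measurable lborel" by simp
    show "\<And>n. (\<lambda>t. \<bar>f t\<bar> * indicator (- W n) t) \<in> borel_measurable lborel"
      using integrable_real_mult_indicator[OF Wsets af] by blast
    show "integrable lborel (\<lambda>t. \<bar>f t\<bar>)" by (rule af)
    show "AE t in lborel. (\<lambda>n. \<bar>f t\<bar> * indicator (- W n) t) \<longlonglongrightarrow> 0"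
      using AE_lborel_singleton[of 0]
    proof eventually_elim
      case (elim t)
      then obtain j where j: "t \<in> A j" using cover by blast
      have "eventually (\<lambda>n. \<bar>f t\<bar> * indicator (- W n) t = (0::real)) sequentially"
        unfolding eventually_sequentially
      proof (intro exI[of _ "nat \<bar>j\<bar>"] allI impI)
        fix n assume "nat \<bar>j\<bar> \<le> n"
        then have "j \<in> {-int n..int n}" by auto
        then have "t \<in> W n" using j unfolding W_def U_def by blast
        then show "\<bar>f t\<bar> * indicator (- W n) t = 0" by simp
      qed
      then show ?case by (rule tendsto_eventually)
    qed
    show "\<And>n. AE t in lborel. norm (\<bar>f t\<bar> * indicator (- W n) t) \<le> \<bar>f t\<bar>"
      by (auto simp: indicator_def)
  qed
  show ?thesis unfolding has_sum_def
  proof (rule tendstoI)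
    fix e :: real assume e: "e > 0"
    have "eventually (\<lambda>n. (\<integral>t. \<bar>f t\<bar> * indicator (- W n) t \<partial>lborel) < e) sequentially"
      using order_tendstoD(2)[OF lim] e by simp
    then obtain n where n: "(\<integral>t. \<bar>f t\<bar> * indicator (- W n) t \<partial>lborel) < e"
      by (auto simp: eventually_sequentially)
    show "eventually (\<lambda>F. dist (\<Sum>j\<in>F. \<integral>t. f t * indicator (A j) t \<partial>lborel) (\<integral>t. f t \<partial>lborel) < e)
            (finite_subsets_at_top UNIV)"
      unfolding eventually_finite_subsets_at_top
    proof (intro exI[of _ "{-int n..int n}"] conjI allI impI)
      fix Y assume Y: "finite Y \<and> {-int n..int n} \<subseteq> Y \<and> Y \<subseteq> UNIV"
      have int1: "integrable lborel (\<lambda>t. f t * indicator (U Y) t)"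
        using integrable_real_mult_indicator[OF Usets f] Y by blast
      have "dist (\<Sum>j\<in>Y. \<integral>t. f t * indicator (A j) t \<partial>lborel) (\<integral>t. f t \<partial>lborel)
          = \<bar>(\<integral>t. f t \<partial>lborel) - (\<integral>t. f t * indicator (U Y) t \<partial>lborel)\<bar>"
        using sumF Y by (simp add: dist_real_def abs_minus_commute)
      also have "\<dots> = \<bar>\<integral>t. f t - f t * indicator (U Y) t \<partial>lborel\<bar>"
        using Bochner_Integration.integral_diff[OF f int1] by simp
      also have "\<dots> \<le> (\<integral>t. \<bar>f t - f t * indicator (U Y) t\<bar> \<partial>lborel)"
        by (rule integral_abs_bound)
      also have "\<dots> \<le> (\<integral>t. \<bar>f t\<bar> * indicator (- W n) t \<partial>lborel)"
      proof (rule integral_mono)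
        show "integrable lborel (\<lambda>t. \<bar>f t - f t * indicator (U Y) t\<bar>)"
          using f int1 by auto
        show "integrable lborel (\<lambda>t. \<bar>f t\<bar> * indicator (- W n) t)"
          by (rule integrable_real_mult_indicator[OF Wsets af])
        fix t
        have "W n \<subseteq> U Y" using Y unfolding W_def U_def by blast
        then show "\<bar>f t - f t * indicator (U Y) t\<bar> \<le> \<bar>f t\<bar> * indicator (- W n) t"
          by (auto simp: indicator_def)
      qed
      also have "\<dots> < e" by (rule n)
      finally show "dist (\<Sum>j\<in>Y. \<integral>t. f t * indicator (A j) t \<partial>lborel) (\<integral>t. f t \<partial>lborel) < e" .
    qed auto
  qed
qed

lemma powi_exp: "0 < (c::real) \<Longrightarrow> c powi j = exp (real_of_int j * ln c)"
  using powr_real_of_int'[of c j] by (simp add: powr_def)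

lemma part1:
  fixes f :: "real \<Rightarrow> real"
  assumes c: "0 < c" "c < 1" and f: "integrable lborel f" and g: "\<gamma> \<noteq> 0"
  shows "((\<lambda>j::int. Kop c f (c powi j * \<gamma>)) has_sum (\<integral>t. f t \<partial>lborel)) UNIV"
proof -
  define r where "r = \<bar>\<gamma>\<bar>"
  define L where "L = ln c"
  have r: "r > 0" using g by (simp add: r_def)
  have L: "L < 0" using c by (simp add: L_def)
  have cL: "c = exp L" using c by (simp add: L_def)
  define A where "A j = {t. exp (real_of_int j * L) * r \<le> \<bar>t\<bar> \<and> \<bar>t\<bar> < exp ((real_of_int j - 1) * L) * r}" for j :: int
  have Kterm: "Kop c f (c powi j * \<gamma>) = (\<integral>t. f t * indicator (A j) t \<partial>lborel)" for j
  proof -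
    have a: "\<bar>c powi j * \<gamma>\<bar> = exp (real_of_int j * L) * r"
      using powi_exp[OF c(1), of j] by (simp add: abs_mult r_def L_def)
    have b: "exp (real_of_int j * L) * r / c = exp ((real_of_int j - 1) * L) * r"
      by (simp add: cL left_diff_distrib exp_diff)
    have "{t. \<bar>c powi j * \<gamma>\<bar> \<le> \<bar>t\<bar> \<and> \<bar>t\<bar> < \<bar>c powi j * \<gamma>\<bar>/c} = A j"
      unfolding A_def a b ..
    then show ?thesis using Kop_eq[OF c(1), of f "c powi j * \<gamma>"] by simp
  qed
  have meas: "A j \<in> sets lborel" for j unfolding A_def by measurable
  have disj1: "A i \<inter> A j = {}" if ij: "i < j" for i j
  proof -
    have "real_of_int j - 1 \<ge> real_of_int i" using ij by linarith
    then have "(real_of_int j - 1) * L \<le> real_of_int i * L"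
      using L by (intro mult_right_mono_neg) auto
    then have "exp ((real_of_int j - 1) * L) * r \<le> exp (real_of_int i * L) * r"
      using r by (intro mult_right_mono) auto
    then show ?thesis unfolding A_def by auto
  qed
  have disj: "disjoint_family A"
    unfolding disjoint_family_on_def
  proof (intro ballI impI)
    fix i j :: int assume "i \<noteq> j"
    then consider "i < j" | "j < i" by linarith
    then show "A i \<inter> A j = {}" using disj1 by cases (auto simp: Int_commute)
  qed
  have cover: "\<exists>j. t \<in> A j" if t: "t \<noteq> 0" for t
  proof -
    define x where "x = ln (\<bar>t\<bar> / r) / L"
    define j where "j = \<lceil>x\<rceil>"
    have xL: "x * L = ln (\<bar>t\<bar> / r)" using L by (simp add: x_def)
    have "real_of_int j \<ge> x" unfolding j_def by simp
    then have "real_of_int j * L \<le> x * L" using L by (intro mult_right_mono_neg) auto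
    moreover have tp: "\<bar>t\<bar> / r > 0" using t r by simp
    ultimately have "exp (real_of_int j * L) \<le> \<bar>t\<bar> / r" using xL
      by (metis exp_le_cancel_iff exp_ln)
    then have 1: "exp (real_of_int j * L) * r \<le> \<bar>t\<bar>" using r by (simp add: field_simps)
    have "real_of_int j - 1 < x" unfolding j_def by linarith
    then have "(real_of_int j - 1) * L > x * L" using L by (intro mult_strict_right_mono_neg) auto
    then have "exp ((real_of_int j - 1) * L) > \<bar>t\<bar> / r" using xL tp
      by (metis exp_less_cancel_iff exp_ln)
    then have 2: "\<bar>t\<bar> < exp ((real_of_int j - 1) * L) * r" using r by (simp add: field_simps)
    show ?thesis using 1 2 unfolding A_def by blast
  qed
  have "((\<lambda>j. \<integral>t. f t * indicator (A j) t \<partial>lborel) has_sum (\<integral>t. f t \<partial>lborel)) UNIV"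
    by (rule has_sum_integral_partition[OF f meas disj cover])
  then show ?thesis using Kterm by simp
qed

theorem proposition3p3:
  fixes c :: real and f :: "real \<Rightarrow> real"
  assumes "0 < c" and "c < 1"
  shows "(integrable lborel f \<longrightarrow>
            (\<forall>\<gamma>. \<gamma> \<noteq> 0 \<longrightarrow>
               ((\<lambda>j::int. Kop c f (c powi j * \<gamma>)) has_sum (\<integral>t. f t \<partial>lborel)) UNIV))
       \<and> (\<forall>k::nat. Ck k f \<and> (\<exists>\<delta>>0. \<forall>t. \<bar>t\<bar> < \<delta> \<longrightarrow> f t = 0)
               \<longrightarrow> Ck (Suc k) (Kop c f))"
  using part1[OF assms] part2[OF assms] by blast

end
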